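(* Fix $1<p<2$. For every sufficiently small $\varepsilon>0$ the following holds: if $(g,h)$ is the unique solution on $[0,\infty)$ of the system (S) described in the context with initial conditions $g(0)=-1$ and $h(0)=\varepsilon$ (i.e. at $r=1$), then $h>0$ and $g<0$ on all of $[0,\infty)$.
   Context: Mass 2 spatial Schwarzschild: $(\mathbb{R}^3\setminus B_1(0),g_s=(1+1/r)^4\delta_{ij})$, $r=|x|$. Let $u_s$ be the radial solution of $\operatorname{div}_{g_s}(|\nabla u_s|^{p-2}\nabla u_s)=0$ with $u_s=1$ at $r=1$, $u_s\to0$ as $r\to\infty$; $w_s=(1-p)\log u_s$, and $r\mapsto t=w_s(r)$ is an increasing bijection $[1,\infty)\to[0,\infty)$. $W_s(t)=\int_{\{w_s=t\}}|\nabla w_s|_{g_s}^2\,da_{g_s}$. System (S) for functions $g,h$ of $t$: $\left(\frac{dg}{dt}+h\right)W_s^2+\left(g-2(p-2)h+(p-1)(3-p)\frac{dh}{dt}\right)W_s\frac{dW_s}{dt}+\frac{(p-1)(5-p)}{4}h\left(\frac{dW_s}{dt}\right)^2=0$ and $\left(\frac{dg}{dt}+h\right)W_s^2-\frac{(p-1)(5-p)}{4}h\left(\frac{dW_s}{dt}\right)^2=0$. (This is a linear first-order system whose solutions exist on all of $[0,\infty)$ and are determined by $g(0),h(0)$.) *)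

theory Defs
  imports "HOL-Analysis.Analysis"
begin

text \<open>Conformal factor of the mass 2 spatial Schwarzschild metric
  g_s = (1 + 1/r)^4 delta, as a function of r = |x|.\<close>
definition schw_phi :: "real \<Rightarrow> real" where
  "schw_phi r = 1 + 1 / r"

text \<open>For a radial function u(r), the equation div_g(|grad u|_g^(p-2) grad u) = 0 for
  g = phi^4 delta on R^3 reduces to (r^2 phi^(6-2p) |u'|^(p-2) u')' = 0, i.e.
  |u'| = c (r^2 phi^(6-2p))^(-1/(p-1)).  The decaying solution with u(1) = 1 is
  u_s(r) = (int_r^oo rho) / (int_1^oo rho), rho the profile below.\<close>
definition schw_rho :: "real \<Rightarrow> real \<Rightarrow> real" where
  "schw_rho p r = (r\<^sup>2 * schw_phi r powr (6 - 2 * p)) powr (- 1 / (p - 1))"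

definition u_s :: "real \<Rightarrow> real \<Rightarrow> real" where
  "u_s p r = integral {r..} (schw_rho p) / integral {1..} (schw_rho p)"

definition w_s :: "real \<Rightarrow> real \<Rightarrow> real" where
  "w_s p r = (1 - p) * ln (u_s p r)"

text \<open>Inverse of r \<mapsto> t = w_s(r) (taken on r > 0, so that t ranges over an open
  interval containing [0, oo), and r(0) = 1).\<close>
definition r_of_t :: "real \<Rightarrow> real \<Rightarrow> real" where
  "r_of_t p t = inv_into {0<..} (w_s p) t"

text \<open>W_s(t) = int_{w_s = t} |grad w_s|_{g_s}^2 da_{g_s}: on the coordinate sphere of
  radius r, |grad w|_g^2 = phi^(-4) (w'(r))^2 and the g_s-area is 4 pi r^2 phi^4.\<close>
definition W_s :: "real \<Rightarrow> real \<Rightarrow> real" where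
  "W_s p t = (let r = r_of_t p t in
      (deriv (w_s p) r)\<^sup>2 / (schw_phi r) ^ 4 * (4 * pi * r\<^sup>2 * (schw_phi r) ^ 4))"

definition system_S :: "real \<Rightarrow> real \<Rightarrow> real \<Rightarrow> real \<Rightarrow> real \<Rightarrow> real \<Rightarrow> bool" where
  "system_S p t gv hv dg dh \<longleftrightarrow>
     (let W = W_s p t; W' = deriv (W_s p) t in
       (dg + hv) * W\<^sup>2 + (gv - 2 * (p - 2) * hv + (p - 1) * (3 - p) * dh) * W * W'
         + (p - 1) * (5 - p) / 4 * hv * W'\<^sup>2 = 0
     \<and> (dg + hv) * W\<^sup>2 - (p - 1) * (5 - p) / 4 * hv * W'\<^sup>2 = 0)"

end

theory Submission
  imports Defs
begin


context
  fixes p :: real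
  assumes p1: "1 < p" and p2: "p < 2"
begin

definition "Lr s = - (2 / s - (6 - 2*p) / (s * (s + 1))) / (p - 1)"

lemma rho_exp: "s > 0 \<Longrightarrow> schw_rho p s = exp (- (2 * ln s + (6 - 2*p) * ln (1 + 1/s)) / (p - 1))"
proof -
  assume s: "s > 0"
  have ph: "schw_phi s > 0" using s by (simp add: schw_phi_def add_pos_pos)
  have "schw_rho p s = exp ((- 1 / (p - 1)) * ln (s\<^sup>2 * schw_phi s powr (6 - 2 * p)))"
    unfolding schw_rho_def powr_def using s ph by simp
  also have "ln (s\<^sup>2 * schw_phi s powr (6 - 2 * p)) = 2 * ln s + (6 - 2*p) * ln (1 + 1/s)"
    using s ph by (simp add: ln_mult ln_powr schw_phi_def ln_realpow)
  finally show ?thesis using p1 by (simp add: field_simps)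
qed

lemma rho_pos: "s > 0 \<Longrightarrow> schw_rho p s > 0"
  using rho_exp by simp

lemma rho_deriv: "s > 0 \<Longrightarrow> (schw_rho p has_real_derivative schw_rho p s * Lr s) (at s)"
proof -
  assume s: "s > 0"
  have e: "(1 + 1 / s) * s = s + 1" using s by (simp add: field_simps)
  have d: "((\<lambda>x. exp (- (2 * ln x + (6 - 2*p) * ln (1 + 1/x)) / (p - 1))) has_real_derivative
      exp (- (2 * ln s + (6 - 2*p) * ln (1 + 1/s)) / (p - 1)) * Lr s) (at s)"
    using s p1 e
    apply (auto intro!: derivative_eq_intros simp: Lr_def)
    apply (simp add: field_simps power2_eq_square)
    done
  have "(schw_rho p has_real_derivative exp (- (2 * ln s + (6 - 2*p) * ln (1 + 1/s)) / (p - 1)) * Lr s) (at s)"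
    by (rule has_field_derivative_transform_within_open[OF d, where S="{0<..}"]) (use s rho_exp in auto)
  thus ?thesis using rho_exp[OF s] by simp
qed

lemma rho_le: "s > 0 \<Longrightarrow> schw_rho p s \<le> s powr (- 2 / (p - 1))"
proof -
  assume s: "s > 0"
  have ph: "schw_phi s \<ge> 1" using s by (simp add: schw_phi_def)
  have "1 \<le> schw_phi s powr (6 - 2 * p)"
    using ph p2 by (intro ge_one_powr_ge_zero) auto
  hence "s\<^sup>2 \<le> s\<^sup>2 * schw_phi s powr (6 - 2 * p)"
    using s by (simp add: mult_le_cancel_left1)
  hence "(s\<^sup>2 * schw_phi s powr (6 - 2 * p)) powr (- 1 / (p - 1)) \<le> (s\<^sup>2) powr (- 1 / (p - 1))"
    using s p1 by (intro powr_mono2') auto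
  also have "(s\<^sup>2) powr (- 1 / (p - 1)) = s powr (- 2 / (p - 1))"
  proof -
    have "s\<^sup>2 = s powr 2" using s by (simp add: powr_realpow)
    thus ?thesis by (simp add: powr_powr)
  qed
  finally show ?thesis unfolding schw_rho_def .
qed


lemma rho_cont: "c > 0 \<Longrightarrow> continuous_on {c..} (schw_rho p)"
  by (intro continuous_at_imp_continuous_on ballI DERIV_isCont[OF rho_deriv]) auto

lemma rho_cont2: "c > 0 \<Longrightarrow> continuous_on {c..b} (schw_rho p)"
  by (intro continuous_at_imp_continuous_on ballI DERIV_isCont[OF rho_deriv]) auto

lemma powr_int: "c > 0 \<Longrightarrow> ((\<lambda>x. x powr (- 2 / (p - 1))) has_integral c powr (1 - 2/(p-1)) / (2/(p-1) - 1)) {c..}"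
proof -
  assume c: "c > 0"
  have e: "- 2 / (p - 1) < -1" using p1 p2 by (simp add: field_simps)
  have "((\<lambda>x. x powr (- 2 / (p - 1))) has_integral -(c powr (- 2 / (p - 1)+1)) / (- 2 / (p - 1)+1)) {c..}"
    by (rule has_integral_powr_to_inf[OF e c])
  moreover have "-(c powr (- 2 / (p - 1)+1)) / (- 2 / (p - 1)+1) = c powr (1 - 2/(p-1)) / (2/(p-1) - 1)"
  proof -
    have "- 2 / (p - 1)+1 = -(2/(p-1) - 1)" "1 - 2/(p-1) = - 2 / (p - 1)+1" by simp_all
    thus ?thesis by (simp only: minus_divide_divide)
  qed
  ultimately show ?thesis by simp
qed

lemma rho_int: "c > 0 \<Longrightarrow> schw_rho p integrable_on {c..}"
proof -
  assume c: "c > 0"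
  show ?thesis
  proof (rule measurable_bounded_by_integrable_imp_integrable[where g = "\<lambda>x. x powr (- 2 / (p - 1))"])
    show "schw_rho p \<in> borel_measurable (lebesgue_on {c..})"
      by (rule continuous_imp_measurable_on_sets_lebesgue[OF rho_cont[OF c]]) auto
    show "(\<lambda>x. x powr (- 2 / (p - 1))) integrable_on {c..}"
      using powr_int[OF c] by blast
    show "norm (schw_rho p x) \<le> x powr (- 2 / (p - 1))" if "x \<in> {c..}" for x
      using that c rho_le[of x] rho_pos[of x] by auto
  qed auto
qed

definition "Jf r = integral {r..} (schw_rho p)"

lemma J_split: "0 < c \<Longrightarrow> c \<le> r \<Longrightarrow> Jf c = integral {c..r} (schw_rho p) + Jf r"
proof -
  assume c: "0 < c" and r: "c \<le> r"
  have "{c..} = {c..r} \<union> {r..}" using r by auto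
  moreover have "{c..r} \<inter> {r..} = {r}" using r by auto
  ultimately show ?thesis unfolding Jf_def
    using c r by (simp add: integrable_continuous_real rho_cont2 rho_int)
qed

lemma J_deriv: "r > 0 \<Longrightarrow> (Jf has_real_derivative - schw_rho p r) (at r)"
proof -
  assume r: "r > 0"
  have d0: "((\<lambda>x. integral {x..2*r} (schw_rho p)) has_real_derivative - schw_rho p r) (at r within {r/2..2*r})"
    using r by (intro integral_has_real_derivative' rho_cont2) auto
  have "interior {r/2..2*r} = {r/2<..<2*r}" by simp
  hence "at r within {r/2..2*r} = at r" using r by (intro at_within_interior) auto
  hence d1: "((\<lambda>x. integral {x..2*r} (schw_rho p) + Jf (2*r)) has_real_derivative - schw_rho p r) (at r)"
    using d0 by (auto intro!: derivative_eq_intros)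
  show ?thesis
    by (rule has_field_derivative_transform_within_open[OF d1, where S="{r/2<..<2*r}"])
       (use r in \<open>auto intro!: J_split[symmetric]\<close>)
qed

lemma J_le: "r > 0 \<Longrightarrow> Jf r \<le> r powr (1 - 2/(p-1)) / (2/(p-1) - 1)"
  unfolding Jf_def
  using integral_le[OF rho_int _, of r "\<lambda>x. x powr (- 2 / (p - 1))"] powr_int[of r] rho_le
  by (auto simp: integrable_on_def integral_unique)

lemma J_nonneg: "r > 0 \<Longrightarrow> Jf r \<ge> 0"
  unfolding Jf_def using rho_int rho_pos by (intro integral_nonneg) (auto intro: less_imp_le)

lemma J_lim: "(Jf \<longlongrightarrow> 0) at_top"
proof (rule tendsto_sandwich[where f = "\<lambda>_. 0" and h = "\<lambda>r. r powr (1 - 2/(p-1)) / (2/(p-1) - 1)"])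
  show "\<forall>\<^sub>F n in at_top. 0 \<le> Jf n"
    using J_nonneg eventually_at_top_dense by blast
  show "\<forall>\<^sub>F n in at_top. Jf n \<le> n powr (1 - 2/(p-1)) / (2/(p-1) - 1)"
    using J_le eventually_at_top_dense by blast
  have "1 - 2/(p-1) < 0" using p1 p2 by (simp add: field_simps)
  hence "((\<lambda>r. r powr (1 - 2/(p-1))) \<longlongrightarrow> 0) at_top"
    by (intro tendsto_neg_powr filterlim_ident)
  thus "((\<lambda>r. r powr (1 - 2/(p-1)) / (2/(p-1) - 1)) \<longlongrightarrow> 0) at_top"
    by (intro tendsto_divide_zero)
qed auto

lemma J_pos: "r > 0 \<Longrightarrow> Jf r > 0"
  using DERIV_neg_imp_decreasing_at_top[OF _ J_lim, of r] J_deriv rho_pos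
  by (metis less_le_trans neg_less_0_iff_less)


definition "Bf x = (p - 1) * x * (x + 1) / ((3 - p) * (x - 1))"

lemma B_deriv: "x > 1 \<Longrightarrow> (Bf has_real_derivative (p - 1) * (x\<^sup>2 - 2*x - 1) / ((3 - p) * (x - 1)\<^sup>2)) (at x)"
proof -
  assume x: "x > 1"
  have nz: "x - 1 \<noteq> 0" "3 - p \<noteq> 0" using x p2 by auto
  show ?thesis unfolding Bf_def using nz
    apply (auto intro!: derivative_eq_intros)
    apply (simp add: divide_simps)
    apply (simp add: algebra_simps power2_eq_square)
    done
qed

lemma Bf_pos: "x > 1 \<Longrightarrow> Bf x > 0"
  unfolding Bf_def using p1 p2 by (intro divide_pos_pos mult_pos_pos) auto

lemma F_alg: "x > 1 \<Longrightarrow> Lr x * Bf x + (p - 1) * (x\<^sup>2 - 2*x - 1) / ((3 - p) * (x - 1)\<^sup>2) + 1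
    = - 2 * x * (p - 1) / ((3 - p) * (x - 1)\<^sup>2)"
proof -
  assume x: "x > 1"
  have nz: "x - 1 \<noteq> 0" "3 - p \<noteq> 0" "p - 1 \<noteq> 0" "x \<noteq> 0" "x + 1 \<noteq> 0" using x p1 p2 by auto
  show ?thesis unfolding Lr_def Bf_def using nz
    by (simp add: divide_simps) (simp add: algebra_simps power2_eq_square)
qed

lemma rhoB_lim: "((\<lambda>x. schw_rho p x * Bf x) \<longlongrightarrow> 0) at_top"
proof (rule tendsto_sandwich[where f = "\<lambda>_. 0" and h = "\<lambda>x. 3 * (p - 1) / (3 - p) * x powr (1 - 2/(p-1))"])
  have "eventually (\<lambda>x. x \<ge> (2::real)) at_top" by (rule eventually_ge_at_top)
  thus "\<forall>\<^sub>F n in at_top. 0 \<le> schw_rho p n * Bf n"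
    by eventually_elim (use rho_pos Bf_pos in \<open>auto intro!: mult_nonneg_nonneg less_imp_le\<close>)
  show "\<forall>\<^sub>F n in at_top. schw_rho p n * Bf n \<le> 3 * (p - 1) / (3 - p) * n powr (1 - 2/(p-1))"
    using \<open>eventually (\<lambda>x. x \<ge> (2::real)) at_top\<close>
  proof eventually_elim
    case (elim x)
    have x0: "x > 0" using elim by simp
    have b0: "Bf x \<ge> 0" using elim p1 p2 by (simp add: Bf_def)
    have b1: "Bf x \<le> 3 * (p - 1) / (3 - p) * x"
    proof -
      have "x + 1 \<le> 3 * (x - 1)" using elim by simp
      hence "(p - 1) * x * (x + 1) \<le> (p - 1) * x * (3 * (x - 1))" using elim p1 by (intro mult_left_mono) auto
      hence "(p - 1) * x * (x + 1) / ((3 - p) * (x - 1)) \<le> (p - 1) * x * (3 * (x - 1)) / ((3 - p) * (x - 1))"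
        using elim p2 by (intro divide_right_mono) auto
      also have "... = 3 * (p - 1) / (3 - p) * x" using elim p2 by (simp add: divide_simps) (simp add: algebra_simps)
      finally show ?thesis unfolding Bf_def .
    qed
    have "schw_rho p x * Bf x \<le> x powr (- 2 / (p - 1)) * (3 * (p - 1) / (3 - p) * x)"
      using rho_le[OF x0] rho_pos[OF x0] b0 b1 by (intro mult_mono) auto
    also have "... = 3 * (p - 1) / (3 - p) * (x * x powr (- 2 / (p - 1)))"
      by simp
    also have "x * x powr (- 2 / (p - 1)) = x powr (1 - 2/(p-1))"
      using x0 by (subst diff_conv_add_uminus, subst powr_add) simp
    finally show ?case .
  qed
  have "1 - 2/(p-1) < 0" using p1 p2 by (simp add: field_simps)
  hence "((\<lambda>r. r powr (1 - 2/(p-1))) \<longlongrightarrow> 0) at_top"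
    by (intro tendsto_neg_powr filterlim_ident)
  thus "((\<lambda>x. 3 * (p - 1) / (3 - p) * x powr (1 - 2/(p-1))) \<longlongrightarrow> 0) at_top"
    by (intro tendsto_mult_right_zero)
qed auto

lemma J_lt_rhoB: "r > 1 \<Longrightarrow> Jf r < schw_rho p r * Bf r"
proof -
  assume r: "r > 1"
  have "0 < (\<lambda>x. schw_rho p x * Bf x - Jf x) r"
  proof (rule DERIV_neg_imp_decreasing_at_top[where f = "\<lambda>x. schw_rho p x * Bf x - Jf x"])
    fix x assume x: "x \<ge> r"
    hence x1: "x > 1" using r by simp
    have d: "((\<lambda>x. schw_rho p x * Bf x - Jf x) has_real_derivative
       schw_rho p x * ((p - 1) * (x\<^sup>2 - 2*x - 1) / ((3 - p) * (x - 1)\<^sup>2)) + schw_rho p x * Lr x * Bf x - (- schw_rho p x)) (at x)"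
      using x1 by (intro DERIV_diff[OF DERIV_mult'[OF rho_deriv B_deriv] J_deriv]) auto
    have e1: "schw_rho p x * ((p - 1) * (x\<^sup>2 - 2*x - 1) / ((3 - p) * (x - 1)\<^sup>2)) + schw_rho p x * Lr x * Bf x - (- schw_rho p x)
        = schw_rho p x * (Lr x * Bf x + (p - 1) * (x\<^sup>2 - 2*x - 1) / ((3 - p) * (x - 1)\<^sup>2) + 1)"
      by (simp only: ring_distribs mult_1_right mult.assoc diff_minus_eq_add)
    have e2: "schw_rho p x * (Lr x * Bf x + (p - 1) * (x\<^sup>2 - 2*x - 1) / ((3 - p) * (x - 1)\<^sup>2) + 1) = schw_rho p x * (- 2 * x * (p - 1) / ((3 - p) * (x - 1)\<^sup>2))"
      by (simp only: F_alg[OF x1])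
    have neg: "schw_rho p x * (- 2 * x * (p - 1) / ((3 - p) * (x - 1)\<^sup>2)) < 0"
    proof -
      have "0 < 2*x*(p-1)/((3 - p) * (x - 1)\<^sup>2)" using x1 p1 p2 by (intro divide_pos_pos mult_pos_pos) auto
      hence "0 < schw_rho p x * (2*x*(p-1)/((3 - p) * (x - 1)\<^sup>2))" using x1 rho_pos[of x] by (intro mult_pos_pos) auto
      thus ?thesis by (simp add: minus_divide_left[symmetric])
    qed
    show "\<exists>y. ((\<lambda>x. schw_rho p x * Bf x - Jf x) has_real_derivative y) (at x) \<and> y < 0"
      using d neg unfolding e1 e2 by blast
  next
    show "((\<lambda>x. schw_rho p x * Bf x - Jf x) \<longlongrightarrow> 0) at_top"
      using tendsto_diff[OF rhoB_lim J_lim] by simp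
  qed
  thus ?thesis by simp
qed


lemma w_eq: "r > 0 \<Longrightarrow> w_s p r = (1 - p) * ln (Jf r / Jf 1)"
  unfolding w_s_def u_s_def Jf_def by simp

lemma w_deriv: "r > 0 \<Longrightarrow> (w_s p has_real_derivative (p - 1) * schw_rho p r / Jf r) (at r)"
proof -
  assume r: "r > 0"
  have J1: "Jf 1 > 0" by (rule J_pos) simp
  have d: "((\<lambda>x. (1 - p) * ln (Jf x / Jf 1)) has_real_derivative (p - 1) * schw_rho p r / Jf r) (at r)"
    using r J1 J_pos[OF r]
    apply (auto intro!: derivative_eq_intros J_deriv)
    apply (simp add: divide_simps)
    apply (simp add: algebra_simps)
    done
  show ?thesis
    by (rule has_field_derivative_transform_within_open[OF d, where S="{0<..}"]) (use r w_eq in auto)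
qed

lemma deriv_w: "r > 0 \<Longrightarrow> deriv (w_s p) r = (p - 1) * schw_rho p r / Jf r"
  by (rule DERIV_imp_deriv[OF w_deriv])

lemma w_deriv_pos: "r > 0 \<Longrightarrow> (p - 1) * schw_rho p r / Jf r > 0"
  using p1 rho_pos J_pos by simp

lemma w_mono: "0 < x \<Longrightarrow> x < y \<Longrightarrow> w_s p x < w_s p y"
proof -
  assume xy: "0 < x" "x < y"
  show ?thesis
  proof (rule DERIV_pos_imp_increasing[where f = "w_s p"])
    fix z assume "x \<le> z" "z \<le> y"
    hence z: "z > 0" using xy by simp
    show "\<exists>D. (w_s p has_real_derivative D) (at z) \<and> D > 0"
      using w_deriv[OF z] w_deriv_pos[OF z] by blast
  qed (use xy in auto)
qed

lemma w_cont: "r > 0 \<Longrightarrow> isCont (w_s p) r"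
  using w_deriv DERIV_isCont by blast

lemma w_1: "w_s p 1 = 0"
  using w_eq[of 1] J_pos[of 1] by simp

lemma w_inj: "inj_on (w_s p) {0<..}"
proof (rule inj_onI)
  fix x y assume "x \<in> {0<..}" "y \<in> {0<..}" "w_s p x = w_s p y"
  thus "x = y" using w_mono[of x y] w_mono[of y x] by (cases x y rule: linorder_cases) auto
qed

lemma w_big: "\<exists>R>1. w_s p R > t"
proof -
  have J1: "Jf 1 > 0" by (rule J_pos) simp
  have "eventually (\<lambda>x. Jf x < Jf 1 * exp (- t / (p - 1))) at_top"
    using J1 by (intro order_tendstoD(2)[OF J_lim]) simp
  moreover have "eventually (\<lambda>x. x > (1::real)) at_top" by (rule eventually_gt_at_top)
  ultimately have "eventually (\<lambda>x. x > 1 \<and> Jf x < Jf 1 * exp (- t / (p - 1))) at_top"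
    by eventually_elim auto
  then obtain N where N: "\<forall>n\<ge>N. n > 1 \<and> Jf n < Jf 1 * exp (- t / (p - 1))"
    unfolding eventually_at_top_linorder by blast
  define R where "R = N"
  have R: "R > 1" "Jf R < Jf 1 * exp (- t / (p - 1))" using N R_def by auto
  have JR: "Jf R > 0" using R by (intro J_pos) simp
  have "Jf R / Jf 1 < exp (- t / (p - 1))" using R(2) by (simp add: pos_divide_less_eq[OF J1] mult.commute)
  hence L: "ln (Jf R / Jf 1) < - t / (p - 1)" using JR J1
    by (metis divide_pos_pos exp_gt_zero ln_exp ln_less_cancel_iff)
  have "(p - 1) * ln (Jf R / Jf 1) < (p - 1) * (- t / (p - 1))"
    using L p1 by (intro mult_strict_left_mono) auto
  also have "(p - 1) * (- t / (p - 1)) = - t" using p1 by simp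
  finally have "(1 - p) * ln (Jf R / Jf 1) > t" by (simp add: algebra_simps)
  thus ?thesis using R w_eq[of R] by auto
qed

definition "t0 = w_s p (1/2)"

lemma t0_neg: "t0 < 0"
  unfolding t0_def using w_mono[of "1/2" 1] w_1 by simp

lemma w_surj: "t > t0 \<Longrightarrow> \<exists>r>1/2. w_s p r = t"
proof -
  assume t: "t > t0"
  obtain R where R: "R > 1" "w_s p R > t" using w_big by blast
  have "\<exists>r\<ge>1/2. r \<le> R \<and> w_s p r = t"
    using t R unfolding t0_def
    by (intro IVT') (auto intro!: continuous_at_imp_continuous_on w_cont)
  then obtain r where "r \<ge> 1/2" "w_s p r = t" by blast
  moreover have "r \<noteq> 1/2"
  proof
    assume "r = 1/2"
    thus False using t \<open>w_s p r = t\<close> unfolding t0_def by (metis less_irrefl)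
  qed
  ultimately show ?thesis by (intro exI[of _ r]) auto
qed

lemma R_props: "t > t0 \<Longrightarrow> r_of_t p t > 0 \<and> w_s p (r_of_t p t) = t"
proof -
  assume t: "t > t0"
  then obtain r where r: "r > 1/2" "w_s p r = t" using w_surj by blast
  hence tin: "t \<in> w_s p ` {0<..}" by force
  show ?thesis unfolding r_of_t_def
    using inv_into_into[OF tin] f_inv_into_f[OF tin] by auto
qed

lemma R_ge1: "t \<ge> 0 \<Longrightarrow> r_of_t p t \<ge> 1"
proof (rule ccontr)
  assume t: "t \<ge> 0" and "\<not> r_of_t p t \<ge> 1"
  hence "r_of_t p t < 1" by simp
  moreover have "t > t0" using t t0_neg by simp
  ultimately have "w_s p (r_of_t p t) < w_s p 1" using R_props w_mono by blast
  thus False using R_props[of t] t t0_neg w_1 by simp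
qed

lemma R_w: "z > 0 \<Longrightarrow> r_of_t p (w_s p z) = z"
  unfolding r_of_t_def using w_inj by (intro inv_into_f_f) auto

lemma R_cont: "t > t0 \<Longrightarrow> isCont (r_of_t p) t"
proof -
  assume t: "t > t0"
  define x where "x = r_of_t p t"
  have x: "x > 0" "w_s p x = t" using R_props[OF t] x_def by auto
  have "isCont (r_of_t p) (w_s p x)"
  proof (rule isCont_inverse_function[where d = "x/2" and f = "w_s p" and x = x])
    fix z assume "\<bar>z - x\<bar> \<le> x / 2"
    hence z: "z > 0" using x by arith
    show "r_of_t p (w_s p z) = z" using R_w[OF z] .
  next
    fix z assume "\<bar>z - x\<bar> \<le> x / 2"
    hence z: "z > 0" using x by arith
    show "isCont (w_s p) z" using w_cont[OF z] .
  qed (use x in auto)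
  thus ?thesis using x by simp
qed

lemma R_deriv: "t > t0 \<Longrightarrow> (r_of_t p has_real_derivative inverse ((p - 1) * schw_rho p (r_of_t p t) / Jf (r_of_t p t))) (at t)"
proof -
  assume t: "t > t0"
  show ?thesis
  proof (rule DERIV_inverse_function[where f = "w_s p" and a = t0 and b = "t + 1"])
    show "(w_s p has_real_derivative (p - 1) * schw_rho p (r_of_t p t) / Jf (r_of_t p t)) (at (r_of_t p t))"
      using R_props[OF t] by (intro w_deriv) auto
    show "(p - 1) * schw_rho p (r_of_t p t) / Jf (r_of_t p t) \<noteq> 0"
      using R_props[OF t] w_deriv_pos by (metis less_irrefl)
    show "\<And>y. t0 < y \<Longrightarrow> y < t + 1 \<Longrightarrow> w_s p (r_of_t p y) = y" using R_props by blast
    show "isCont (r_of_t p) t" using R_cont[OF t] .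
  qed (use t in auto)
qed


definition "Phi r = ((p - 1) * schw_rho p r / Jf r)\<^sup>2 * (4 * pi * r\<^sup>2)"

lemma W_eq: "t > t0 \<Longrightarrow> W_s p t = Phi (r_of_t p t)"
proof -
  assume t: "t > t0"
  define r where "r = r_of_t p t"
  have r: "r > 0" using R_props[OF t] r_def by auto
  have "schw_phi r > 0" using r by (simp add: schw_phi_def add_pos_pos)
  hence ph: "schw_phi r \<noteq> 0" by simp
  show ?thesis
    unfolding W_s_def Let_def Phi_def r_def[symmetric] deriv_w[OF r] using ph by simp
qed

lemma Phi_pos: "r > 0 \<Longrightarrow> Phi r > 0"
  unfolding Phi_def using p1 rho_pos[of r] J_pos[of r] by (intro mult_pos_pos) auto

lemma Phi_deriv: "r > 0 \<Longrightarrow> (Phi has_real_derivative Phi r * (2 * (Lr r + schw_rho p r / Jf r + 1 / r))) (at r)"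
proof -
  assume r: "r > 0"
  have J: "Jf r \<noteq> 0" using J_pos[OF r] by simp
  have r0: "r \<noteq> 0" using r by simp
  show ?thesis unfolding Phi_def
    using r J r0
    apply (auto intro!: derivative_eq_intros rho_deriv J_deriv)
    apply (simp add: divide_simps)
    apply (simp add: algebra_simps power2_eq_square)
    done
qed

lemma W_deriv: "t > t0 \<Longrightarrow> (W_s p has_real_derivative
   Phi (r_of_t p t) * (2 * (Lr (r_of_t p t) + schw_rho p (r_of_t p t) / Jf (r_of_t p t) + 1 / r_of_t p t))
   * inverse ((p - 1) * schw_rho p (r_of_t p t) / Jf (r_of_t p t))) (at t)"
proof -
  assume t: "t > t0"
  have r: "r_of_t p t > 0" using R_props[OF t] by auto
  have d: "((\<lambda>x. Phi (r_of_t p x)) has_real_derivative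
   Phi (r_of_t p t) * (2 * (Lr (r_of_t p t) + schw_rho p (r_of_t p t) / Jf (r_of_t p t) + 1 / r_of_t p t))
   * inverse ((p - 1) * schw_rho p (r_of_t p t) / Jf (r_of_t p t))) (at t)"
    by (rule DERIV_chain2[OF Phi_deriv[OF r] R_deriv[OF t]])
  show ?thesis
    by (rule has_field_derivative_transform_within_open[OF d, where S="{t0<..}"]) (use t W_eq in auto)
qed

lemma Lr_alg: "r > 0 \<Longrightarrow> Lr r + 1 / r = (p - 3) * (r - 1) / ((p - 1) * r * (r + 1))"
proof -
  assume r: "r > 0"
  have nz: "r \<noteq> 0" "r + 1 \<noteq> 0" "p - 1 \<noteq> 0" using r p1 by auto
  show ?thesis unfolding Lr_def using nz
    by (simp add: divide_simps) (simp add: algebra_simps power2_eq_square)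
qed

lemma aux_ineq:
  fixes P c m :: real
  assumes "P > 0" "c > 0" "m \<le> 0" "m + c > 0"
  shows "0 < P * (2 * (m + c)) * inverse ((p - 1) * c)"
    and "P * (2 * (m + c)) * inverse ((p - 1) * c) \<le> 2 / (p - 1) * P"
proof -
  show "0 < P * (2 * (m + c)) * inverse ((p - 1) * c)"
    using assms p1 by (intro mult_pos_pos) auto
  have "P * (2 * (m + c)) * inverse ((p - 1) * c) = 2 / (p - 1) * P * ((m + c) / c)"
    using assms p1 by (simp add: field_simps)
  also have "... \<le> 2 / (p - 1) * P * 1"
    using assms p1 by (intro mult_left_mono) auto
  finally show "P * (2 * (m + c)) * inverse ((p - 1) * c) \<le> 2 / (p - 1) * P" by simp
qed

lemma W_facts: "t \<ge> 0 \<Longrightarrow> W_s p t > 0 \<and> deriv (W_s p) t > 0 \<and> deriv (W_s p) t \<le> 2 / (p - 1) * W_s p t"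
proof -
  assume t: "t \<ge> 0"
  hence tt: "t > t0" using t0_neg by simp
  define r where "r = r_of_t p t"
  have r1: "r \<ge> 1" using R_ge1[OF t] r_def by simp
  hence r: "r > 0" by simp
  have Wt: "W_s p t = Phi r" using W_eq[OF tt] r_def by simp
  have dW: "deriv (W_s p) t = Phi r * (2 * (Lr r + 1 / r + schw_rho p r / Jf r)) * inverse ((p - 1) * (schw_rho p r / Jf r))"
    using DERIV_imp_deriv[OF W_deriv[OF tt]] r_def by (simp add: algebra_simps)
  have c: "schw_rho p r / Jf r > 0" using rho_pos[OF r] J_pos[OF r] by simp
  have m: "Lr r + 1 / r \<le> 0"
    unfolding Lr_alg[OF r] using r1 p1 p2
    by (intro divide_nonpos_pos mult_nonpos_nonneg) auto
  have mc: "Lr r + 1 / r + schw_rho p r / Jf r > 0"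
  proof (cases "r = 1")
    case True
    thus ?thesis using c Lr_alg[of 1] by simp
  next
    case False
    hence r1': "r > 1" using r1 by simp
    have JB: "Jf r < schw_rho p r * Bf r" by (rule J_lt_rhoB[OF r1'])
    have Bp: "Bf r > 0" by (rule Bf_pos[OF r1'])
    have Jp: "Jf r > 0" by (rule J_pos[OF r])
    have "1 / Bf r < schw_rho p r / Jf r"
      using JB Bp Jp by (simp add: divide_simps mult.commute)
    moreover have "1 / Bf r = - (Lr r + 1 / r)"
    proof -
      have nz: "r \<noteq> 0" "r + 1 \<noteq> 0" "p - 1 \<noteq> 0" "3 - p \<noteq> 0" "r - 1 \<noteq> 0" using r1' p1 p2 by auto
      show ?thesis unfolding Lr_alg[OF r] Bf_def using nz
        by (simp add: divide_simps) (simp add: algebra_simps)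
    qed
    ultimately show ?thesis by simp
  qed
  show ?thesis
    unfolding Wt dW using aux_ineq[OF Phi_pos[OF r] c m mc] Phi_pos[OF r] by blast
qed

end



lemma mono_lemma:
  fixes f f' :: "real \<Rightarrow> real"
  assumes ab: "a < b" and c: "continuous_on {a..b} f"
    and d: "\<And>x. a < x \<Longrightarrow> x < b \<Longrightarrow> (f has_real_derivative f' x) (at x) \<and> f' x \<le> 0"
  shows "f b \<le> f a"
proof -
  obtain l z where z: "a < z" "z < b" "(f has_real_derivative l) (at z)" "f b - f a = (b - a) * l"
    using MVT[OF ab c] d real_differentiable_def by metis
  have "l = f' z" using d[OF z(1,2)] z(3) DERIV_unique by blast
  hence "l \<le> 0" using d[OF z(1,2)] by simp
  hence "(b - a) * l \<le> 0" using ab by (simp add: mult_nonneg_nonpos)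
  thus ?thesis using z(4) by simp
qed

lemma at_pos_within: "(x::real) > 0 \<Longrightarrow> at x within {0..} = at x"
  by (intro at_within_interior) auto

lemma ode_main:
  fixes p \<epsilon> :: real and g h g' h' a :: "real \<Rightarrow> real"
  assumes p1: "1 < p" and p2: "p < 2" and e1: "0 < \<epsilon>" and e2: "\<epsilon> < 1/2"
    and der: "\<And>t. t \<ge> 0 \<Longrightarrow> (g has_real_derivative g' t) (at t within {0..}) \<and> (h has_real_derivative h' t) (at t within {0..})"
    and eqg: "\<And>t. t \<ge> 0 \<Longrightarrow> g' t = - h t + (p - 1) * (5 - p) / 4 * h t * (a t)\<^sup>2"
    and eqh: "\<And>t. t \<ge> 0 \<Longrightarrow> (p - 1) * (3 - p) * h' t = - g t - 2 * (2 - p) * h t - 2 * ((p - 1) * (5 - p) / 4) * h t * a t"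
    and abd: "\<And>t. t \<ge> 0 \<Longrightarrow> 0 < a t \<and> a t \<le> 2 / (p - 1)"
    and g0: "g 0 = -1" and h0: "h 0 = \<epsilon>"
  shows "\<forall>t\<ge>0. h t > 0 \<and> g t < 0"
proof (rule ccontr)
  define c1 where "c1 = (p - 1) * (5 - p) / 4"
  define k where "k = (p - 1) * (3 - p)"
  define phi where "phi = (\<lambda>t. g t + (3 - p) * h t)"
  define S where "S = {0..} \<inter> h -` {..0} \<union> {0..} \<inter> phi -` {0..}"
  have c1p: "c1 > 0" and kp: "k > 0" using p1 p2 by (auto simp: c1_def k_def)
  have contg: "continuous_on {0..} g" and conth: "continuous_on {0..} h"
    unfolding continuous_on_eq_continuous_within
    by (metis der DERIV_continuous atLeast_iff)+
  have contphi: "continuous_on {0..} phi"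
    unfolding phi_def by (intro continuous_intros contg conth)
  assume "\<not> (\<forall>t\<ge>0. h t > 0 \<and> g t < 0)"
  then obtain t1 where t1: "t1 \<ge> 0" "h t1 \<le> 0 \<or> g t1 \<ge> 0" by force
  have "t1 \<in> S"
  proof (cases "h t1 \<le> 0")
    case False
    hence "phi t1 \<ge> 0" using t1 p2 unfolding phi_def by (simp add: add_nonneg_nonneg)
    thus ?thesis using t1 unfolding S_def by auto
  qed (use t1 S_def in auto)
  hence Sne: "S \<noteq> {}" by auto
  have Sbdd: "bdd_below S" unfolding S_def by (rule bdd_belowI[of _ 0]) auto
  have Scl: "closed S" unfolding S_def
    by (intro closed_Un continuous_closed_preimage contphi conth) auto
  define T where "T = Inf S"
  have TS: "T \<in> S" unfolding T_def by (rule closed_contains_Inf[OF Sne Sbdd Scl])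
  have T0: "T \<ge> 0" using TS unfolding S_def by auto
  have before: "h s > 0 \<and> phi s < 0" if "0 \<le> s" "s < T" for s
  proof -
    have "s \<notin> S" using that cInf_lower[OF _ Sbdd, of s] unfolding T_def by force
    thus ?thesis using that unfolding S_def by auto
  qed
  have phi0: "phi 0 < 0" unfolding phi_def g0 h0 using e1 e2 p1 p2
  proof -
    have "(3 - p) * \<epsilon> < 2 * (1/2)" using e1 e2 p1 by (intro mult_strict_mono) auto
    thus "-1 + (3 - p) * \<epsilon> < 0" by simp
  qed
  have Tpos: "T > 0"
  proof (rule ccontr)
    assume "\<not> T > 0"
    hence "T = 0" using T0 by simp
    thus False using TS phi0 h0 e1 unfolding S_def by auto
  qed
  have derat: "(g has_real_derivative g' t) (at t) \<and> (h has_real_derivative h' t) (at t)" if "t > 0" for t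
    using der[of t] that at_pos_within[OF that] by auto
  have phiT: "phi T < 0"
  proof -
    define psi where "psi = (\<lambda>t. exp (t / (p - 1)) * phi t)"
    have "psi T \<le> psi 0"
    proof (rule mono_lemma[where a = 0 and b = T and f' = "\<lambda>t. exp (t / (p - 1)) * (c1 * h t * a t * (a t - 2 / (p - 1)))"])
      show "continuous_on {0..T} psi" using p1 unfolding psi_def
        by (intro continuous_intros continuous_on_subset[OF contphi]) auto
      fix x assume x: "0 < x" "x < T"
      have hx: "h x > 0" using before[of x] x by auto
      have ax: "0 < a x" "a x \<le> 2 / (p - 1)" using abd[of x] x by auto
      have dphi: "(phi has_real_derivative g' x + (3 - p) * h' x) (at x)"
        unfolding phi_def using derat[OF x(1)] by (auto intro!: derivative_eq_intros)
      have alg: "g' x + (3 - p) * h' x + phi x / (p - 1) = c1 * h x * a x * (a x - 2 / (p - 1))"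
      proof -
        have "(3 - p) * h' x = (- g x - 2 * (2 - p) * h x - 2 * c1 * h x * a x) / (p - 1)"
          using eqh[of x] x p1 unfolding c1_def by (simp add: field_simps)
        thus ?thesis unfolding eqg[of x, OF less_imp_le[OF x(1)]] phi_def c1_def using p1
          by (simp add: field_simps power2_eq_square)
      qed
      have "(psi has_real_derivative exp (x / (p - 1)) * (1 / (p - 1)) * phi x + exp (x / (p - 1)) * (g' x + (3 - p) * h' x)) (at x)"
        using p1 unfolding psi_def by (auto intro!: derivative_eq_intros dphi)
      moreover have "exp (x / (p - 1)) * (1 / (p - 1)) * phi x + exp (x / (p - 1)) * (g' x + (3 - p) * h' x)
          = exp (x / (p - 1)) * (c1 * h x * a x * (a x - 2 / (p - 1)))"
      proof -
        have "exp (x / (p - 1)) * (1 / (p - 1)) * phi x + exp (x / (p - 1)) * (g' x + (3 - p) * h' x)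
           = exp (x / (p - 1)) * (g' x + (3 - p) * h' x + phi x / (p - 1))" by (simp add: algebra_simps)
        thus ?thesis using alg by simp
      qed
      moreover have "c1 * h x * a x * (a x - 2 / (p - 1)) \<le> 0"
        using c1p hx ax by (intro mult_nonneg_nonpos) auto
      ultimately show "(psi has_real_derivative exp (x / (p - 1)) * (c1 * h x * a x * (a x - 2 / (p - 1)))) (at x) \<and>
          exp (x / (p - 1)) * (c1 * h x * a x * (a x - 2 / (p - 1))) \<le> 0"
        by (simp add: mult_nonneg_nonpos)
    qed (use Tpos in auto)
    hence "exp (T / (p - 1)) * phi T \<le> phi 0" unfolding psi_def by simp
    hence "exp (T / (p - 1)) * phi T < 0" using phi0 by simp
    thus ?thesis by (simp add: mult_less_0_iff)
  qed
  define K where "K = (2 * (2 - p) + 2 * c1 * (2 / (p - 1))) / k"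
  have hT: "h T > 0"
  proof -
    define chi where "chi = (\<lambda>t. exp (K * t) * h t)"
    have "chi 0 \<le> chi T"
    proof -
      have "(\<lambda>t. - chi t) T \<le> (\<lambda>t. - chi t) 0"
      proof (rule mono_lemma[where a = 0 and b = T and f' = "\<lambda>t. - (exp (K * t) * (h' t + K * h t))"])
        show "continuous_on {0..T} (\<lambda>t. - chi t)" unfolding chi_def
          by (intro continuous_intros continuous_on_subset[OF conth]) auto
        fix x assume x: "0 < x" "x < T"
        have hx: "h x > 0" and phx: "phi x < 0" using before[of x] x by auto
        have ax: "0 < a x" "a x \<le> 2 / (p - 1)" using abd[of x] x by auto
        have "k * h' x = - g x - 2 * (2 - p) * h x - 2 * c1 * h x * a x"
          using eqh[of x] x unfolding k_def c1_def by simp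
        also have "- g x = - phi x + (3 - p) * h x" unfolding phi_def by simp
        finally have kh: "k * h' x = - phi x + (3 - p) * h x - 2 * (2 - p) * h x - 2 * c1 * h x * a x" .
        have m: "2 * c1 * h x * a x \<le> 2 * c1 * h x * (2 / (p - 1))"
          using c1p hx ax by (intro mult_left_mono) auto
        have f1: "(3 - p) * h x \<ge> 0" using hx p2 by simp
        have "k * h' x \<ge> - (2 * (2 - p) * h x) - 2 * c1 * h x * (2 / (p - 1))"
          using kh phx f1 m by linarith
        moreover have kK: "k * K = 2 * (2 - p) + 2 * c1 * (2 / (p - 1))" unfolding K_def using kp by simp
        moreover have "- (k * K) * h x = - (2 * (2 - p) * h x) - 2 * c1 * h x * (2 / (p - 1))"
          unfolding kK by (simp add: algebra_simps)
        ultimately have "k * h' x \<ge> - (k * K) * h x" by linarith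
        hence "k * (h' x + K * h x) \<ge> 0" by (simp add: algebra_simps)
        hence hk: "h' x + K * h x \<ge> 0" using kp by (simp add: zero_le_mult_iff)
        have "(chi has_real_derivative exp (K * x) * K * h x + exp (K * x) * h' x) (at x)"
          unfolding chi_def using derat[OF x(1)] by (auto intro!: derivative_eq_intros)
        hence "((\<lambda>t. - chi t) has_real_derivative - (exp (K * x) * (h' x + K * h x))) (at x)"
          by (auto intro!: derivative_eq_intros simp: algebra_simps)
        thus "((\<lambda>t. - chi t) has_real_derivative - (exp (K * x) * (h' x + K * h x))) (at x) \<and>
           - (exp (K * x) * (h' x + K * h x)) \<le> 0"
          using hk by simp
      qed (use Tpos in auto)
      thus ?thesis by simp
    qed
    hence "h 0 \<le> exp (K * T) * h T" unfolding chi_def by simp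
    hence "exp (K * T) * h T > 0" using h0 e1 by simp
    thus ?thesis by (simp add: zero_less_mult_iff)
  qed
  show False using TS phiT hT unfolding S_def by auto
qed



lemma sys_solve:
  fixes p W V gv hv dg dh :: real
  assumes W: "W > 0" and V: "V > 0"
    and e1: "(dg + hv) * W\<^sup>2 + (gv - 2 * (p - 2) * hv + (p - 1) * (3 - p) * dh) * W * V
         + (p - 1) * (5 - p) / 4 * hv * V\<^sup>2 = 0"
    and e2: "(dg + hv) * W\<^sup>2 - (p - 1) * (5 - p) / 4 * hv * V\<^sup>2 = 0"
  shows "dg = - hv + (p - 1) * (5 - p) / 4 * hv * (V / W)\<^sup>2"
    and "(p - 1) * (3 - p) * dh = - gv - 2 * (2 - p) * hv - 2 * ((p - 1) * (5 - p) / 4) * hv * (V / W)"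
proof -
  define c where "c = (p - 1) * (5 - p) / 4"
  have e2': "(dg + hv) * W\<^sup>2 = c * hv * V\<^sup>2" using e2 unfolding c_def by simp
  hence "dg + hv = c * hv * (V / W)\<^sup>2" using W by (simp add: field_simps power2_eq_square)
  thus "dg = - hv + (p - 1) * (5 - p) / 4 * hv * (V / W)\<^sup>2" unfolding c_def by simp
  have "(gv - 2 * (p - 2) * hv + (p - 1) * (3 - p) * dh) * W * V + 2 * c * hv * V\<^sup>2 = 0"
  proof -
    have e1': "(dg + hv) * W\<^sup>2 + (gv - 2 * (p - 2) * hv + (p - 1) * (3 - p) * dh) * W * V + c * hv * V\<^sup>2 = 0"
      using e1 unfolding c_def .
    have "(gv - 2 * (p - 2) * hv + (p - 1) * (3 - p) * dh) * W * V + 2 * c * hv * V\<^sup>2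
       = ((dg + hv) * W\<^sup>2 + (gv - 2 * (p - 2) * hv + (p - 1) * (3 - p) * dh) * W * V + c * hv * V\<^sup>2)
         - ((dg + hv) * W\<^sup>2 - c * hv * V\<^sup>2)" by (simp add: algebra_simps)
    also have "... = 0" using e1' e2' by simp
    finally show ?thesis .
  qed
  moreover have "((gv - 2 * (p - 2) * hv + (p - 1) * (3 - p) * dh) + 2 * c * hv * (V / W)) * (W * V)
     = (gv - 2 * (p - 2) * hv + (p - 1) * (3 - p) * dh) * W * V + 2 * c * hv * ((V / W) * (W * V))"
    by (simp add: algebra_simps)
  moreover have "(V / W) * (W * V) = V\<^sup>2" using W by (simp add: power2_eq_square)
  ultimately have "((gv - 2 * (p - 2) * hv + (p - 1) * (3 - p) * dh) + 2 * c * hv * (V / W)) * (W * V) = 0"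
    by simp
  hence "(gv - 2 * (p - 2) * hv + (p - 1) * (3 - p) * dh) + 2 * c * hv * (V / W) = 0"
    using W V by simp
  thus "(p - 1) * (3 - p) * dh = - gv - 2 * (2 - p) * hv - 2 * ((p - 1) * (5 - p) / 4) * hv * (V / W)"
    unfolding c_def by (simp add: algebra_simps)
qed


theorem proposition3p10:
  fixes p :: real
  assumes "1 < p" and "p < 2"
  shows "\<exists>\<epsilon>0>0. \<forall>\<epsilon>. 0 < \<epsilon> \<and> \<epsilon> < \<epsilon>0 \<longrightarrow>
           (\<forall>g h g' h' :: real \<Rightarrow> real.
              (\<forall>t\<ge>0. (g has_real_derivative g' t) (at t within {0..})
                    \<and> (h has_real_derivative h' t) (at t within {0..})
                    \<and> system_S p t (g t) (h t) (g' t) (h' t))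
              \<and> g 0 = -1 \<and> h 0 = \<epsilon>
              \<longrightarrow> (\<forall>t\<ge>0. h t > 0 \<and> g t < 0))"
proof -
  have Wf: "W_s p t > 0 \<and> deriv (W_s p) t > 0 \<and> deriv (W_s p) t \<le> 2 / (p - 1) * W_s p t"
    if "t \<ge> 0" for t
    using W_facts[OF assms that] .
  show ?thesis
  proof (rule exI[of _ "1/2"], rule conjI)
    show "(0::real) < 1/2" by simp
  next
    show "\<forall>\<epsilon>. 0 < \<epsilon> \<and> \<epsilon> < 1/2 \<longrightarrow>
           (\<forall>g h g' h' :: real \<Rightarrow> real.
              (\<forall>t\<ge>0. (g has_real_derivative g' t) (at t within {0..})
                    \<and> (h has_real_derivative h' t) (at t within {0..})
                    \<and> system_S p t (g t) (h t) (g' t) (h' t))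
              \<and> g 0 = -1 \<and> h 0 = \<epsilon>
              \<longrightarrow> (\<forall>t\<ge>0. h t > 0 \<and> g t < 0))"
  proof (rule allI, rule impI, rule allI, rule allI, rule allI, rule allI, rule impI)
    fix \<epsilon> :: real and g h g' h' :: "real \<Rightarrow> real"
    assume eps: "0 < \<epsilon> \<and> \<epsilon> < 1/2"
    assume H: "(\<forall>t\<ge>0. (g has_real_derivative g' t) (at t within {0..})
                    \<and> (h has_real_derivative h' t) (at t within {0..})
                    \<and> system_S p t (g t) (h t) (g' t) (h' t))
              \<and> g 0 = -1 \<and> h 0 = \<epsilon>"
    have sys: "dg_eq \<and> dh_eq"
      if "t \<ge> 0" and "dg_eq = (g' t = - h t + (p - 1) * (5 - p) / 4 * h t * (deriv (W_s p) t / W_s p t)\<^sup>2)"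
        and "dh_eq = ((p - 1) * (3 - p) * h' t = - g t - 2 * (2 - p) * h t - 2 * ((p - 1) * (5 - p) / 4) * h t * (deriv (W_s p) t / W_s p t))"
      for t dg_eq dh_eq
    proof -
      have S: "system_S p t (g t) (h t) (g' t) (h' t)" using H that(1) by blast
      have W: "W_s p t > 0" and V: "deriv (W_s p) t > 0" using Wf[OF that(1)] by auto
      show ?thesis
        using sys_solve[OF W V, of "g' t" "h t" "g t" p "h' t"] S unfolding system_S_def Let_def that(2,3)
        by blast
    qed
    show "\<forall>t\<ge>0. h t > 0 \<and> g t < 0"
    proof (rule ode_main[where a = "\<lambda>t. deriv (W_s p) t / W_s p t" and p = p and \<epsilon> = \<epsilon> and g = g and h = h and g' = g' and h' = h'])
      show "1 < p" "p < 2" using assms by auto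
      show "0 < \<epsilon>" "\<epsilon> < 1/2" using eps by auto
      show "g 0 = -1" "h 0 = \<epsilon>" using H by auto
      fix t :: real assume t: "t \<ge> 0"
      show "(g has_real_derivative g' t) (at t within {0..}) \<and> (h has_real_derivative h' t) (at t within {0..})"
        using H t by blast
      show "g' t = - h t + (p - 1) * (5 - p) / 4 * h t * (deriv (W_s p) t / W_s p t)\<^sup>2"
        using sys[OF t refl refl] by blast
      show "(p - 1) * (3 - p) * h' t = - g t - 2 * (2 - p) * h t - 2 * ((p - 1) * (5 - p) / 4) * h t * (deriv (W_s p) t / W_s p t)"
        using sys[OF t refl refl] by blast
      have W: "W_s p t > 0" and V: "deriv (W_s p) t > 0" and VW: "deriv (W_s p) t \<le> 2 / (p - 1) * W_s p t"
        using Wf[OF t] by auto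
      show "0 < deriv (W_s p) t / W_s p t \<and> deriv (W_s p) t / W_s p t \<le> 2 / (p - 1)"
        using W V VW by (simp add: pos_divide_le_eq)
    qed
  qed
  qed
qed

end
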